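(* Let $X$ be a finite q-cycle set and $x\in X$. Let $C_x:=\bigcup_{n}\mathcal{C}_n$, where $\mathcal{C}_0:=\{x\}$ and $\mathcal{C}_n:=\mathcal{C}_{n-1}\cup\{\sigma_a(b):a,b\in\mathcal{C}_{n-1}\}\cup\{\delta_a(b):a,b\in\mathcal{C}_{n-1}\}$ for $n\ge1$. Then $C_x$ is an indecomposable q-cycle set.
   Context: A q-cycle set is a non-empty set $X$ with operations $\cdot,:$ such that each $\sigma_x:y\mapsto x\cdot y$ is bijective and $(x\cdot y)\cdot(x\cdot z)=(y:x)\cdot(y\cdot z)$, $(x:y):(x:z)=(y\cdot x):(y:z)$, $(x\cdot y):(x\cdot z)=(y:x)\cdot(y:z)$ for all $x,y,z$; $\delta_x(y):=x:y$. A sub-q-cycle set is a subset that is a q-cycle set under the restricted operations. A q-cycle set is indecomposable if it admits no partition into two nonempty sub-q-cycle sets (for finite ones, equivalently the group generated by all $\sigma_y,\delta_y$ acts transitively). *)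

theory Defs
  imports Main
begin

text \<open>A q-cycle set on carrier X with operations dot (x\<cdot>y = \<sigma>_x y) and col (x:y = \<delta>_x y).
  The operations are total functions on the ambient type; the structure is their
  restriction to X, so we require X to be closed under both.\<close>
definition q_cycle_set :: "'a set \<Rightarrow> ('a \<Rightarrow> 'a \<Rightarrow> 'a) \<Rightarrow> ('a \<Rightarrow> 'a \<Rightarrow> 'a) \<Rightarrow> bool" where
  "q_cycle_set X dot col \<longleftrightarrow>
     X \<noteq> {} \<and>
     (\<forall>x\<in>X. \<forall>y\<in>X. dot x y \<in> X \<and> col x y \<in> X) \<and>
     (\<forall>x\<in>X. bij_betw (dot x) X X) \<and>
     (\<forall>x\<in>X. \<forall>y\<in>X. \<forall>z\<in>X.
        dot (dot x y) (dot x z) = dot (col y x) (dot y z) \<and>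
        col (col x y) (col x z) = col (dot y x) (col y z) \<and>
        col (dot x y) (dot x z) = dot (col y x) (col y z))"

definition sub_q_cycle_set :: "'a set \<Rightarrow> 'a set \<Rightarrow> ('a \<Rightarrow> 'a \<Rightarrow> 'a) \<Rightarrow> ('a \<Rightarrow> 'a \<Rightarrow> 'a) \<Rightarrow> bool" where
  "sub_q_cycle_set Y X dot col \<longleftrightarrow> Y \<subseteq> X \<and> q_cycle_set Y dot col"

definition indecomposable_q_cycle_set :: "'a set \<Rightarrow> ('a \<Rightarrow> 'a \<Rightarrow> 'a) \<Rightarrow> ('a \<Rightarrow> 'a \<Rightarrow> 'a) \<Rightarrow> bool" where
  "indecomposable_q_cycle_set X dot col \<longleftrightarrow>
     q_cycle_set X dot col \<and>
     \<not> (\<exists>A B. A \<noteq> {} \<and> B \<noteq> {} \<and> A \<inter> B = {} \<and> A \<union> B = X \<and>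
            sub_q_cycle_set A X dot col \<and> sub_q_cycle_set B X dot col)"

fun Cgen :: "('a \<Rightarrow> 'a \<Rightarrow> 'a) \<Rightarrow> ('a \<Rightarrow> 'a \<Rightarrow> 'a) \<Rightarrow> 'a \<Rightarrow> nat \<Rightarrow> 'a set" where
  "Cgen dot col x 0 = {x}"
| "Cgen dot col x (Suc n) = Cgen dot col x n
     \<union> {dot a b | a b. a \<in> Cgen dot col x n \<and> b \<in> Cgen dot col x n}
     \<union> {col a b | a b. a \<in> Cgen dot col x n \<and> b \<in> Cgen dot col x n}"

definition Cx :: "('a \<Rightarrow> 'a \<Rightarrow> 'a) \<Rightarrow> ('a \<Rightarrow> 'a \<Rightarrow> 'a) \<Rightarrow> 'a \<Rightarrow> 'a set" where
  "Cx dot col x = (\<Union>n. Cgen dot col x n)"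

end

theory Submission
  imports Defs
begin

lemma Cgen_mono_Suc: "Cgen dot col x n \<subseteq> Cgen dot col x (Suc n)"
  by auto

lemma Cgen_mono: "n \<le> m \<Longrightarrow> Cgen dot col x n \<subseteq> Cgen dot col x m"
  by (induction m rule: dec_induct) (auto)

lemma Cgen_sub:
  assumes "q_cycle_set X dot col" "x \<in> X"
  shows "Cgen dot col x n \<subseteq> X"
proof (induction n)
  case 0 then show ?case using assms(2) by simp
next
  case (Suc n)
  have cl: "\<forall>a\<in>X. \<forall>b\<in>X. dot a b \<in> X \<and> col a b \<in> X" using assms(1) unfolding q_cycle_set_def by blast
  show ?case using Suc.IH cl by (simp only: Cgen.simps) blast
qed

lemma Cx_sub:
  assumes "q_cycle_set X dot col" "x \<in> X"
  shows "Cx dot col x \<subseteq> X"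
  using Cgen_sub[OF assms] unfolding Cx_def by blast

lemma Cx_closed:
  assumes "a \<in> Cx dot col x" "b \<in> Cx dot col x"
  shows "dot a b \<in> Cx dot col x \<and> col a b \<in> Cx dot col x"
proof -
  obtain n m where n: "a \<in> Cgen dot col x n" and m: "b \<in> Cgen dot col x m"
    using assms unfolding Cx_def by blast
  have "a \<in> Cgen dot col x (max n m)" using n Cgen_mono[of n "max n m" dot col x] by auto
  moreover have "b \<in> Cgen dot col x (max n m)" using m Cgen_mono[of m "max n m" dot col x] by auto
  ultimately have "dot a b \<in> Cgen dot col x (Suc (max n m)) \<and> col a b \<in> Cgen dot col x (Suc (max n m))"
    by auto
  then show ?thesis unfolding Cx_def by blast
qed

lemma Cx_in_sub:
  assumes "x \<in> A" "\<forall>a\<in>A. \<forall>b\<in>A. dot a b \<in> A \<and> col a b \<in> A"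
  shows "Cx dot col x \<subseteq> A"
proof -
  have "Cgen dot col x n \<subseteq> A" for n
  proof (induction n)
    case 0 then show ?case using assms(1) by simp
  next
    case (Suc n) then show ?case using assms(2) by (simp only: Cgen.simps) blast
  qed
  then show ?thesis unfolding Cx_def by blast
qed

theorem mainTheorem11:
  fixes X :: "'a set" and dot col :: "'a \<Rightarrow> 'a \<Rightarrow> 'a" and x :: 'a
  assumes "finite X" and "q_cycle_set X dot col" and "x \<in> X"
  shows "indecomposable_q_cycle_set (Cx dot col x) dot col"
proof -
  let ?C = "Cx dot col x"
  have sub: "?C \<subseteq> X" by (rule Cx_sub[OF assms(2,3)])
  have fin: "finite ?C" by (rule finite_subset[OF sub assms(1)])
  have xC: "x \<in> ?C" unfolding Cx_def by (rule UN_I[of 0]) simp_all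
  have bij: "bij_betw (dot a) ?C ?C" if a: "a \<in> ?C" for a
  proof -
    have aX: "a \<in> X" using a sub by blast
    have "\<forall>x\<in>X. bij_betw (dot x) X X" using assms(2) unfolding q_cycle_set_def by simp
    then have "bij_betw (dot a) X X" using aX by (rule bspec)
    then have "inj_on (dot a) X" unfolding bij_betw_def by simp
    then have inj: "inj_on (dot a) ?C" using sub by (rule inj_on_subset)
    have img: "dot a ` ?C \<subseteq> ?C" using Cx_closed[OF a] by auto
    have "card (dot a ` ?C) = card ?C" by (rule card_image[OF inj])
    then have "dot a ` ?C = ?C" using card_subset_eq[OF fin img] by simp
    then show ?thesis using inj unfolding bij_betw_def by simp
  qed
  have q: "q_cycle_set ?C dot col"
    unfolding q_cycle_set_def
  proof (intro conjI)
    show "?C \<noteq> {}" using xC by blast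
    show "\<forall>a\<in>?C. \<forall>b\<in>?C. dot a b \<in> ?C \<and> col a b \<in> ?C" by (simp add: Cx_closed)
    show "\<forall>a\<in>?C. bij_betw (dot a) ?C ?C" using bij by blast
    show "\<forall>xa\<in>?C. \<forall>y\<in>?C. \<forall>z\<in>?C.
        dot (dot xa y) (dot xa z) = dot (col y xa) (dot y z) \<and>
        col (col xa y) (col xa z) = col (dot y xa) (col y z) \<and>
        col (dot xa y) (dot xa z) = dot (col y xa) (col y z)"
    proof (intro ballI)
      fix xa y z assume h: "xa \<in> ?C" "y \<in> ?C" "z \<in> ?C"
      then have "xa \<in> X" "y \<in> X" "z \<in> X" using sub by blast+
      then show "dot (dot xa y) (dot xa z) = dot (col y xa) (dot y z) \<and>
        col (col xa y) (col xa z) = col (dot y xa) (col y z) \<and>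
        col (dot xa y) (dot xa z) = dot (col y xa) (col y z)"
        using assms(2) unfolding q_cycle_set_def by simp
    qed
  qed
  have nd: False if "A \<noteq> {}" "B \<noteq> {}" "A \<inter> B = {}" "A \<union> B = ?C"
      "sub_q_cycle_set A ?C dot col" "sub_q_cycle_set B ?C dot col" for A B
  proof -
    have cA: "\<forall>a\<in>A. \<forall>b\<in>A. dot a b \<in> A \<and> col a b \<in> A"
      using that(5) unfolding sub_q_cycle_set_def q_cycle_set_def by simp
    have cB: "\<forall>a\<in>B. \<forall>b\<in>B. dot a b \<in> B \<and> col a b \<in> B"
      using that(6) unfolding sub_q_cycle_set_def q_cycle_set_def by simp
    show False
    proof (cases "x \<in> A")
      case True
      have "?C \<subseteq> A" by (rule Cx_in_sub[OF True cA])
      then show False using that(2,3,4) by blast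
    next
      case False
      then have "x \<in> B" using xC that(4) by blast
      from this cB have "?C \<subseteq> B" by (rule Cx_in_sub)
      then show False using that(1,3,4) by blast
    qed
  qed
  show ?thesis unfolding indecomposable_q_cycle_set_def using q nd by auto
qed

end
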